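(* Let $n\ge3$, $a>0$, $0<b<a/n$, $X=\{x\in\mathbb R^n:\sum_{i=1}^nx_i=a,\ x_i\ge b,\ i=1,\dots,n\}$, $p=1+1/\ln n$, $\gamma=1/(e\ln n)$ and $\omega(x)=\frac1{p\gamma}\sum_{i=1}^n|x_i|^p$. With $\|\cdot\|=\|\cdot\|_1$: (i) $\omega$ is strongly convex on $X$ with modulus $\mu(\omega)=\frac{e}{n\,a^{2-p}}$, i.e. $(\omega'(x)-\omega'(y))^\top(x-y)\ge\frac{e}{na^{2-p}}\|x-y\|_1^2$ for all $x,y\in X$; (ii) $D_{\omega,X}:=\sqrt{2[\max_X\omega-\min_X\omega]}\le\sqrt{\frac{2a^p}{p\gamma}\big(1-n^{-1/\ln n}\big)}$; (iii) for all $x,y\in X$, $V_x(y)\le\frac12M(\omega)\|x-y\|_1^2$ with $M(\omega)=\frac{e}{b^{1-1/\ln n}}$, where $V_x(y)=\omega(y)-\omega(x)-(y-x)^\top\nabla\omega(x)$.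
   Context: $e=\exp(1)$; $\|x\|_1=\sum_i|x_i|$. *)

theory Defs
  imports "HOL-Analysis.Analysis"
begin

definition norm1 :: "real ^ 'n \<Rightarrow> real" where
  "norm1 x = (\<Sum>i\<in>UNIV. \<bar>x $ i\<bar>)"

definition simplexX :: "real \<Rightarrow> real \<Rightarrow> (real ^ 'n) set" where
  "simplexX a b = {x. (\<Sum>i\<in>UNIV. x $ i) = a \<and> (\<forall>i. x $ i \<ge> b)}"

definition pexp :: "nat \<Rightarrow> real" where
  "pexp n = 1 + 1 / ln (real n)"

definition gam :: "nat \<Rightarrow> real" where
  "gam n = 1 / (exp 1 * ln (real n))"

definition omega :: "real ^ 'n \<Rightarrow> real" where
  "omega x = 1 / (pexp CARD('n) * gam CARD('n)) * (\<Sum>i\<in>UNIV. \<bar>x $ i\<bar> powr pexp CARD('n))"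

definition Dom :: "(real ^ 'n \<Rightarrow> real) \<Rightarrow> (real ^ 'n) set \<Rightarrow> real" where
  "Dom w X = sqrt (2 * ((SUP x\<in>X. w x) - (INF x\<in>X. w x)))"

definition bregV :: "(real ^ 'n \<Rightarrow> real) \<Rightarrow> (real ^ 'n \<Rightarrow> real ^ 'n) \<Rightarrow> real ^ 'n \<Rightarrow> real ^ 'n \<Rightarrow> real" where
  "bregV w g x y = w y - w x - (y - x) \<bullet> g x"

end

theory Submission
  imports Defs
begin

lemma taylor2:
  fixes u v p :: real
  assumes u: "0 < u" and v: "0 < v" and uv: "u \<noteq> v"
  shows "\<exists>t. min u v < t \<and> t < max u v \<and>
     v powr p = u powr p + p * u powr (p-1) * (v-u) + p*(p-1)/2 * t powr (p-2) * (v-u)^2"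
proof -
  define diff where "diff = (\<lambda>m::nat. if m = 0 then (\<lambda>t::real. t powr p)
     else if m = 1 then (\<lambda>t. p * t powr (p-1)) else (\<lambda>t. p*(p-1) * t powr (p-2)))"
  have D: "\<forall>m t. m < 2 \<and> min u v \<le> t \<and> t \<le> max u v \<longrightarrow> DERIV (diff m) t :> diff (Suc m) t"
  proof (intro allI impI)
    fix m :: nat and t assume h: "m < 2 \<and> min u v \<le> t \<and> t \<le> max u v"
    then have t: "t > 0" using u v by auto
    from h have "m = 0 \<or> m = 1" by auto
    then show "DERIV (diff m) t :> diff (Suc m) t"
    proof
      assume "m = 0" then show ?thesis unfolding diff_def
        using has_real_derivative_powr[OF t, of p] by simp
    next
      assume "m = 1" then show ?thesis unfolding diff_def
        using DERIV_cmult[OF has_real_derivative_powr[OF t, of "p-1"], of p]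
        by (simp add: algebra_simps)
    qed
  qed
  obtain t where t: "(if v < u then v < t \<and> t < u else u < t \<and> t < v)"
     and eq: "diff 0 v = (\<Sum>m<2. (diff m u / fact m) * (v - u)^m) + (diff 2 t / fact 2) * (v - u)^2"
    using Taylor[of 2 diff "diff 0" "min u v" "max u v" u v, OF _ _ D] uv by auto
  have "min u v < t \<and> t < max u v" using t by (auto split: if_splits)
  moreover have "v powr p = u powr p + p * u powr (p-1) * (v-u) + p*(p-1)/2 * t powr (p-2) * (v-u)^2"
    using eq unfolding diff_def by (simp add: numeral_2_eq_2 fact_2)
  ultimately show ?thesis by blast
qed

lemma mvt_lower:
  fixes u v q a :: real
  assumes u: "0 < u" "u \<le> a" and v: "0 < v" "v \<le> a" and q: "0 < q" "q < 1"
  shows "(u powr q - v powr q) * (u - v) \<ge> q * a powr (q-1) * (u-v)^2"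
proof -
  have key: "(u powr q - v powr q) * (u - v) \<ge> q * a powr (q-1) * (u-v)^2"
    if "0 < v" "v < u" "u \<le> a" for u v
  proof -
    have "\<And>x. v \<le> x \<Longrightarrow> x \<le> u \<Longrightarrow> DERIV (\<lambda>t. t powr q) x :> q * x powr (q-1)"
      using that by (auto intro!: has_real_derivative_powr)
    from MVT2[OF \<open>v<u\<close> this] obtain z where z: "v < z" "z < u"
      and eq: "u powr q - v powr q = (u - v) * (q * z powr (q-1))" by blast
    have "a powr (q-1) \<le> z powr (q-1)"
      by (rule powr_mono2') (use q z that in auto)
    then have "q * a powr (q-1) \<le> q * z powr (q-1)" using q by simp
    then have "q * a powr (q-1) * (u-v)^2 \<le> q * z powr (q-1) * (u-v)^2"
      by (rule mult_right_mono) simp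
    then show ?thesis unfolding eq by (simp add: power2_eq_square algebra_simps)
  qed
  consider "v < u" | "u = v" | "u < v" by linarith
  then show ?thesis
  proof cases
    case 1 then show ?thesis using key[of v u] u v by simp
  next
    case 2 then show ?thesis by simp
  next
    case 3 then have "(v powr q - u powr q) * (v - u) \<ge> q * a powr (q-1) * (v-u)^2"
      using key[of u v] u v by simp
    then show ?thesis by (simp add: algebra_simps power2_eq_square)
  qed
qed

lemma sq_sum_le:
  fixes f :: "'a \<Rightarrow> real"
  assumes "finite A" "\<And>i. i \<in> A \<Longrightarrow> f i \<ge> 0"
  shows "(\<Sum>i\<in>A. (f i)^2) \<le> (\<Sum>i\<in>A. f i)^2"
  using assms
proof (induction A rule: finite_induct)
  case (insert x F)
  have "0 \<le> (\<Sum>i\<in>F. f i)" using insert by (intro sum_nonneg) auto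
  moreover have "f x \<ge> 0" using insert by auto
  ultimately have "0 \<le> 2 * f x * (\<Sum>i\<in>F. f i)" by simp
  moreover have "(\<Sum>i\<in>F. (f i)^2) \<le> (\<Sum>i\<in>F. f i)^2" using insert by auto
  ultimately show ?case using insert by (simp add: power2_eq_square algebra_simps)
qed simp

lemma omega_deriv:
  fixes x :: "real ^ 'n"
  assumes pos: "\<forall>i. x $ i > 0"
  shows "(omega has_derivative (\<lambda>h. (\<chi> i. 1 / (pexp CARD('n) * gam CARD('n)) * (pexp CARD('n) * (x $ i) powr (pexp CARD('n) - 1))) \<bullet> h)) (at x)"
proof -
  define p where "p = pexp CARD('n)"
  have R: "((\<lambda>t. \<bar>t\<bar> powr p) has_real_derivative p * (x$i) powr (p-1)) (at (x$i))" for i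
  proof (rule has_field_derivative_transform_within_open[OF has_real_derivative_powr[of "x$i" p]])
    show "0 < x$i" using pos by auto
    show "open {0::real<..}" by (rule open_greaterThan)
    show "x $ i \<in> {0::real<..}" using pos by auto
    show "t \<in> {0<..} \<Longrightarrow> t powr p = \<bar>t\<bar> powr p" for t by simp
  qed
  define c where "c = 1 / (p * gam CARD('n))"
  have C: "((\<lambda>y. \<bar>y$i\<bar> powr p) has_derivative (\<lambda>h. h$i * (p * (x$i) powr (p-1)))) (at x)" for i
    using DERIV_compose_FDERIV[where g="\<lambda>y. y $ i", OF R bounded_linear.has_derivative[OF bounded_linear_vec_nth has_derivative_ident]]
    by simp
  have "(omega has_derivative (\<lambda>h. c * (\<Sum>i\<in>UNIV. h$i * (p * (x$i) powr (p-1))))) (at x)"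
    unfolding omega_def p_def[symmetric] c_def
    by (intro has_derivative_mult_right has_derivative_sum C)
  moreover have "(\<lambda>h. c * (\<Sum>i\<in>UNIV. h$i * (p * (x$i) powr (p-1)))) =
     (\<lambda>h. (\<chi> i. c * (p * (x $ i) powr (p - 1))) \<bullet> h)"
    by (auto simp: inner_vec_def sum_distrib_left algebra_simps)
  ultimately show ?thesis unfolding c_def p_def by simp
qed

lemma memX:
  fixes x :: "real ^ 'n"
  assumes "x \<in> simplexX a b" "0 < b"
  shows "b \<le> x $ i" "x $ i \<le> a" "0 < x $ i"
proof -
  have s: "(\<Sum>j\<in>UNIV. x $ j) = a" and ge: "\<forall>j. x $ j \<ge> b" using assms unfolding simplexX_def by auto
  show "b \<le> x $ i" "0 < x $ i" using ge assms(2) by (auto intro: less_le_trans)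
  have "(\<Sum>j\<in>UNIV. x $ j) = x $ i + (\<Sum>j\<in>UNIV - {i}. x $ j)"
    by (simp add: sum.remove)
  moreover have "(\<Sum>j\<in>UNIV - {i}. x $ j) \<ge> 0"
    using ge assms(2) by (intro sum_nonneg) (meson less_le_trans less_imp_le)
  ultimately show "x $ i \<le> a" using s by linarith
qed

theorem mainTheorem15:
  fixes a b :: real and grad :: "real ^ 'n \<Rightarrow> real ^ 'n"
  assumes n3: "CARD('n) \<ge> 3"
    and a: "a > 0" and b0: "0 < b" and ba: "b < a / real CARD('n)"
    and grad: "\<forall>x\<in>simplexX a b. (omega has_derivative (\<lambda>h. grad x \<bullet> h)) (at x)"
  shows "(\<forall>x\<in>simplexX a b. \<forall>y\<in>simplexX a b.
            (grad x - grad y) \<bullet> (x - y)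
              \<ge> exp 1 / (real CARD('n) * a powr (2 - pexp CARD('n))) * (norm1 (x - y))\<^sup>2)
       \<and> Dom omega (simplexX a b :: (real ^ 'n) set)
           \<le> sqrt (2 * a powr pexp CARD('n) / (pexp CARD('n) * gam CARD('n))
                   * (1 - real CARD('n) powr (- 1 / ln (real CARD('n)))))
       \<and> (\<forall>x\<in>simplexX a b. \<forall>y\<in>simplexX a b.
            bregV omega grad x y
              \<le> 1 / 2 * (exp 1 / b powr (1 - 1 / ln (real CARD('n)))) * (norm1 (x - y))\<^sup>2)"
proof -
  define X where "X = (simplexX a b :: (real ^ 'n) set)"
  define n where "n = real CARD('n)"
  define L where "L = ln n"
  define q where "q = 1 / L"
  define p where "p = pexp CARD('n)"
  define c where "c = 1 / (p * gam CARD('n))"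
  have n3': "n \<ge> 3" using n3 unfolding n_def by simp
  have "exp 1 < (3::real)"
  proof -
    have e4: "exp (1/4::real) \<le> 1 + 1/4 + (1/4)^2" using exp_bound[of "1/4"] by simp
    have "exp (1::real) = exp (1/4) ^ 4" by (simp flip: exp_of_nat_mult)
    also have "\<dots> \<le> (1 + 1/4 + (1/4)^2) ^ 4" by (rule power_mono[OF e4]) simp
    also have "\<dots> < 3" by (simp add: power_numeral_reduce)
    finally show ?thesis .
  qed
  have L1: "L > 1" unfolding L_def using n3' \<open>exp 1 < 3\<close>
    by (smt (verit) ln_exp ln_less_cancel_iff exp_gt_zero)
  have q01: "0 < q" "q < 1" using L1 unfolding q_def by auto
  have p_eq: "p = 1 + q" unfolding p_def pexp_def q_def L_def n_def by simp
  have gam_eq: "gam CARD('n) = 1 / (exp 1 * L)" unfolding gam_def L_def n_def by simp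
  have cp: "c * p = exp 1 * L" unfolding c_def gam_eq using p_eq q01 by (simp add: field_simps)
  have cpq: "c * p * q = exp 1" unfolding cp q_def using L1 by simp
  have cpos: "c > 0" unfolding c_def gam_eq using p_eq q01 L1 by simp
  have npos: "n > 0" using n3' by simp
  have fin: "finite (UNIV :: 'n set)" by simp
  define G where "G = (\<lambda>x::real^'n. (\<chi> i. 1 / (pexp CARD('n) * gam CARD('n)) * (pexp CARD('n) * (x $ i) powr (pexp CARD('n) - 1))))"
  have gradG: "grad x = G x" if x: "x \<in> X" for x
  proof -
    have "(\<lambda>h. grad x \<bullet> h) = (\<lambda>h. G x \<bullet> h)"
      using has_derivative_unique[OF grad[rule_format, OF x[unfolded X_def]] omega_deriv[of x]]
        memX[OF x[unfolded X_def] b0] unfolding G_def by auto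
    then have "(grad x - G x) \<bullet> (grad x - G x) = 0"
      by (metis inner_diff_left right_minus_eq)
    then show ?thesis by simp
  qed
  have Gi: "G x $ i = c * p * (x $ i) powr q" for x i
    unfolding G_def c_def p_def using p_eq unfolding p_def by simp
  have omega_eq: "omega x = c * (\<Sum>i\<in>UNIV. (x $ i) powr p)" if "x \<in> X" for x
  proof -
    have "\<bar>x $ i\<bar> = x $ i" for i using memX[OF that[unfolded X_def] b0, of i] by simp
    then show ?thesis unfolding omega_def c_def p_def by simp
  qed
  have n1: "norm1 (x - y) = (\<Sum>i\<in>UNIV. \<bar>x $ i - y $ i\<bar>)" for x y :: "real^'n"
    unfolding norm1_def by simp
  have P1: "(grad x - grad y) \<bullet> (x - y) \<ge> exp 1 / (n * a powr (2 - p)) * (norm1 (x - y))\<^sup>2"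
    if x: "x \<in> X" and y: "y \<in> X" for x y
  proof -
    have "(grad x - grad y) \<bullet> (x - y) = (\<Sum>i\<in>UNIV. c * p * (((x$i) powr q - (y$i) powr q) * (x$i - y$i)))"
      unfolding gradG[OF x] gradG[OF y] inner_vec_def by (simp add: Gi algebra_simps)
    also have "\<dots> \<ge> (\<Sum>i\<in>UNIV. c * p * (q * a powr (q-1) * (x$i - y$i)^2))"
    proof (intro sum_mono mult_left_mono)
      fix i
      show "q * a powr (q-1) * (x$i - y$i)^2 \<le> ((x$i) powr q - (y$i) powr q) * (x$i - y$i)"
        using mvt_lower[of "x$i" a "y$i" q] memX[OF x[unfolded X_def] b0] memX[OF y[unfolded X_def] b0] q01
        by auto
      show "0 \<le> c * p" using cp L1 by simp
    qed
    finally have 1: "(grad x - grad y) \<bullet> (x - y) \<ge> exp 1 * a powr (q-1) * (\<Sum>i\<in>UNIV. (x$i - y$i)^2)"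
      by (simp add: sum_distrib_left cpq[symmetric] algebra_simps)
    have 2: "(norm1 (x - y))\<^sup>2 \<le> (\<Sum>i\<in>UNIV. (x$i - y$i)^2) * n"
      unfolding n1 n_def using sum_squared_le_sum_of_squares[of "\<lambda>i. \<bar>x$i - y$i\<bar>" UNIV] by simp
    have e: "exp 1 / (n * a powr (2 - p)) = exp 1 * a powr (q-1) / n"
      using p_eq a npos by (simp add: powr_diff field_simps)
    have "exp 1 / (n * a powr (2 - p)) * (norm1 (x - y))\<^sup>2 \<le> exp 1 * a powr (q-1) / n * ((\<Sum>i\<in>UNIV. (x$i - y$i)^2) * n)"
      unfolding e by (rule mult_left_mono[OF 2]) (use npos in simp)
    also have "\<dots> = exp 1 * a powr (q-1) * (\<Sum>i\<in>UNIV. (x$i - y$i)^2)" using npos by simp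
    finally show ?thesis using 1 by linarith
  qed
  define z where "z = (\<chi> i::'n. a / n)"
  have zX: "z \<in> X" unfolding X_def simplexX_def z_def using ba npos unfolding n_def by simp
  have Xne: "X \<noteq> {}" using zX by auto
  have up: "omega x \<le> c * a powr p" if x: "x \<in> X" for x
  proof -
    have "(\<Sum>i\<in>UNIV. (x $ i) powr p) \<le> (\<Sum>i\<in>UNIV. x $ i * a powr q)"
    proof (rule sum_mono)
      fix i
      have xi: "0 < x$i" "x$i \<le> a" using memX[OF x[unfolded X_def] b0] by auto
      have "(x $ i) powr p = x$i * (x$i) powr q" unfolding p_eq using xi by (simp add: powr_add)
      also have "\<dots> \<le> x$i * a powr q" using xi q01 by (intro mult_left_mono powr_mono2) auto
      finally show "(x $ i) powr p \<le> x $ i * a powr q" .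
    qed
    also have "\<dots> = (\<Sum>i\<in>UNIV. x $ i) * a powr q" by (simp add: sum_distrib_right)
    also have "\<dots> = a * a powr q" using x unfolding X_def simplexX_def by simp
    also have "\<dots> = a powr p" unfolding p_eq using a by (simp add: powr_add)
    finally show ?thesis unfolding omega_eq[OF x] using cpos by simp
  qed
  have low: "omega x \<ge> c * (a powr p * n powr (- q))" if x: "x \<in> X" for x
  proof -
    define u where "u = a / n"
    have u0: "u > 0" unfolding u_def using a npos by simp
    have tang: "(x$i) powr p \<ge> u powr p + p * u powr (p-1) * (x$i - u)" for i
    proof (cases "x$i = u")
      case False
      have xi: "0 < x$i" using memX[OF x[unfolded X_def] b0] by auto
      obtain t where t: "min u (x$i) < t" and eq: "(x$i) powr p = u powr p + p * u powr (p-1) * (x$i-u) + p*(p-1)/2 * t powr (p-2) * (x$i-u)^2"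
        using taylor2[OF u0 xi, of p] False by auto
      have "0 \<le> p*(p-1)/2 * t powr (p-2) * (x$i-u)^2" using p_eq q01 by simp
      then show ?thesis using eq by linarith
    qed simp
    have "(\<Sum>i\<in>UNIV. (x $ i) powr p) \<ge> (\<Sum>i\<in>UNIV. u powr p + p * u powr (p-1) * (x$i - u))"
      by (rule sum_mono) (rule tang)
    moreover have "(\<Sum>i\<in>UNIV. u powr p + p * u powr (p-1) * (x$i - u)) = n * u powr p"
    proof -
      have "(\<Sum>i\<in>UNIV. x$i) = a" using x unfolding X_def simplexX_def by simp
      then have "(\<Sum>i\<in>UNIV. x$i - u) = 0" unfolding u_def n_def by (simp add: sum_subtractf)
      then show ?thesis by (simp add: sum.distrib sum_distrib_left[symmetric] n_def)
    qed
    moreover have "n * u powr p = a powr p * n powr (- q)"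
      unfolding u_def p_eq using a npos by (simp add: powr_divide powr_add powr_minus field_simps)
    ultimately show ?thesis unfolding omega_eq[OF x] using cpos by (simp add: mult_left_mono)
  qed
  have S: "(SUP x\<in>X. omega x) \<le> c * a powr p" using Xne up by (intro cSUP_least) auto
  have I: "(INF x\<in>X. omega x) \<ge> c * (a powr p * n powr (- q))" using Xne low by (intro cINF_greatest) auto
  have P2: "Dom omega X \<le> sqrt (2 * a powr p / (p * gam CARD('n)) * (1 - n powr (- q)))"
    unfolding Dom_def
  proof (rule real_sqrt_le_mono)
    have eq: "2 * a powr p / (p * gam CARD('n)) * (1 - n powr (- q)) = 2 * (c * a powr p - c * (a powr p * n powr (- q)))"
      unfolding c_def by (simp add: algebra_simps add_divide_distrib[symmetric] diff_divide_distrib[symmetric])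
    then show "2 * ((SUP x\<in>X. omega x) - (INF x\<in>X. omega x)) \<le> 2 * a powr p / (p * gam CARD('n)) * (1 - n powr (- q))"
      unfolding eq using S I by (smt (verit))
  qed
  have P3: "bregV omega grad x y \<le> 1 / 2 * (exp 1 / b powr (1 - q)) * (norm1 (x - y))\<^sup>2"
    if x: "x \<in> X" and y: "y \<in> X" for x y
  proof -
    have "bregV omega grad x y = c * (\<Sum>i\<in>UNIV. (y$i) powr p - (x$i) powr p - p * (x$i) powr (p-1) * (y$i - x$i))"
    proof -
      have "(y - x) \<bullet> grad x = (\<Sum>i\<in>UNIV. c * (p * (x$i) powr (p-1) * (y$i - x$i)))"
        unfolding gradG[OF x] inner_vec_def by (simp add: Gi p_eq algebra_simps)
      also have "\<dots> = c * (\<Sum>i\<in>UNIV. p * (x$i) powr (p-1) * (y$i - x$i))"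
        by (simp add: sum_distrib_left)
      finally have g: "(y - x) \<bullet> grad x = c * (\<Sum>i\<in>UNIV. p * (x$i) powr (p-1) * (y$i - x$i))" .
      have "(\<Sum>i\<in>UNIV. (y$i) powr p - (x$i) powr p - p * (x$i) powr (p-1) * (y$i - x$i))
         = (\<Sum>i\<in>UNIV. (y$i) powr p) - (\<Sum>i\<in>UNIV. (x$i) powr p) - (\<Sum>i\<in>UNIV. p * (x$i) powr (p-1) * (y$i - x$i))"
        by (simp add: sum_subtractf)
      then show ?thesis unfolding bregV_def omega_eq[OF x] omega_eq[OF y] g
        by (simp add: right_diff_distrib)
    qed
    also have "\<dots> \<le> c * (\<Sum>i\<in>UNIV. p*(p-1)/2 * b powr (p-2) * (y$i - x$i)^2)"
    proof (intro mult_left_mono sum_mono)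
      fix i
      have xi: "b \<le> x$i" "0 < x$i" and yi: "b \<le> y$i" "0 < y$i"
        using memX[OF x[unfolded X_def] b0] memX[OF y[unfolded X_def] b0] by auto
      show "(y$i) powr p - (x$i) powr p - p * (x$i) powr (p-1) * (y$i - x$i) \<le> p*(p-1)/2 * b powr (p-2) * (y$i - x$i)^2"
      proof (cases "x$i = y$i")
        case False
        obtain t where t: "min (x$i) (y$i) < t" and eq: "(y$i) powr p = (x$i) powr p + p * (x$i) powr (p-1) * (y$i-x$i) + p*(p-1)/2 * t powr (p-2) * (y$i-x$i)^2"
          using taylor2[OF xi(2) yi(2), of p] False by auto
        have "t powr (p-2) \<le> b powr (p-2)"
          by (rule powr_mono2') (use p_eq q01 t xi yi b0 in auto)
        then have "p*(p-1)/2 * t powr (p-2) * (y$i-x$i)^2 \<le> p*(p-1)/2 * b powr (p-2) * (y$i-x$i)^2"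
          using p_eq q01 by (intro mult_right_mono mult_left_mono) auto
        then show ?thesis using eq by linarith
      qed simp
    qed (use cpos in simp)
    also have "\<dots> = exp 1 / 2 * b powr (p-2) * (\<Sum>i\<in>UNIV. (y$i - x$i)^2)"
    proof -
      have "(\<Sum>i\<in>UNIV. p*(p-1)/2 * b powr (p-2) * (y$i - x$i)^2) = (p*(p-1)/2 * b powr (p-2)) * (\<Sum>i\<in>UNIV. (y$i - x$i)^2)"
        by (rule sum_distrib_left[symmetric])
      moreover have "c * (p*(p-1)/2 * b powr (p-2)) = exp 1 / 2 * b powr (p-2)"
      proof -
        have "p - 1 = q" using p_eq by simp
        then have "c * p * (p-1) = exp 1" using cpq by simp
        moreover have "c * (p*(p-1)/2 * b powr (p-2)) = (c * p * (p-1)) / 2 * b powr (p-2)" by simp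
        ultimately show ?thesis by simp
      qed
      ultimately show ?thesis by (simp only: mult.assoc[symmetric])
    qed
    also have "\<dots> \<le> exp 1 / 2 * b powr (p-2) * (norm1 (x - y))\<^sup>2"
    proof (rule mult_left_mono)
      have "(\<Sum>i\<in>UNIV. (y$i - x$i)^2) = (\<Sum>i\<in>UNIV. \<bar>x$i - y$i\<bar>^2)" by (simp add: power2_commute)
      also have "\<dots> \<le> (norm1 (x - y))\<^sup>2" unfolding n1 by (rule sq_sum_le) auto
      finally show "(\<Sum>i\<in>UNIV. (y$i - x$i)^2) \<le> (norm1 (x - y))\<^sup>2" .
    qed simp
    also have "exp 1 / 2 * b powr (p-2) = 1 / 2 * (exp 1 / b powr (1 - q))"
      using p_eq b0 by (simp add: powr_diff field_simps)
    finally show ?thesis .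
  qed
  have qq: "- 1 / ln n = - q" unfolding q_def L_def by simp
  have qq2: "1 / ln n = q" unfolding q_def L_def by simp
  show ?thesis
    using P1 P2 P3 unfolding X_def[symmetric] p_def[symmetric] n_def[symmetric] qq qq2 by blast
qed

end
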